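(* Let $B_1,\dots,B_p,B_{p+1}=V$, $\zeta>0$ and $\tau\in(0,1)$ be as in Lemma 7.2 (a partition of $\mathbb T^d$ with $B_i\subset\pi(K^0_i)$, $f(B_i)\subset\pi(K^1_i)$ for open unit cubes, such that for every disk $\Delta^{cu}$ tangent to $C^{cu}$ with normalized Lebesgue measure $m$, the set $I_n(\underline t)$ of $x\in\Delta^{cu}$ with $\#\{0\le j<n:f^j_{\underline t}x\in B_1\cup\dots\cup B_p\}<\zeta n$ has $m(I_n(\underline t))\le\tau^n$ for all $\underline t$ and large $n$). Given $\sigma_2\in(0,1)$ there are $\eta>0$ and $c>0$ such that if condition (C) holds with constant $\sigma_2$ and condition (D) holds with $\delta_0=\eta$, then for every disk $\Delta^{cu}$ tangent to $C^{cu}$: (1) $m\big(\{x\in\Delta^{cu}:\sum_{j=0}^{n-1}\log\|(Df|T_{f^j_{\underline t}x}\Delta^{cu}_j(\underline t))^{-1}\|\le -cn\}\big)\ge1-\tau^n$ for all $\underline t\in T^{\mathbb N}$ and all large $n$; (2) $\limsup_{n\to\infty}\frac1n\sum_{j=0}^{n-1}\log\|(Df|T_{f^j_{\underline t}x}\Delta^{cu}_j(\underline t))^{-1}\|\le -c$ for $\theta_\varepsilon^{\mathbb N}\times m$-a.e. $(\underline t,x)\in T^{\mathbb N}\times\Delta^{cu}$; and (2) also holds for the constant sequence $\underline t=(f,f,\dots)$ and $m$-a.e. $x\in\Delta^{cu}$. Here $\Delta^{cu}_j(\underline t)=f^j_{\underline t}\Delta^{cu}$.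
   Context: $\mathbb T^d=\mathbb R^d/\mathbb Z^d$, $d\ge2$, $\pi$ the projection, $\hat f$ a linear Anosov diffeomorphism with splitting $E^u\oplus E^s$, $V$ a small closed domain with $V\subset\pi(K^0)$, $\hat f(V)\subset\pi(K^1)$ for open unit cubes. Conditions on a diffeomorphism $g$: (A) invariant cone fields $C^{cu},C^{cs}$ of small width containing $E^u,E^s$; (B) $|\det(Dg|T_x\Delta^{cu})|>\sigma_1$, $|\det(Dg|T_x\Delta^{cs})|<\sigma_1^{-1}$ for some $\sigma_1>1$ and all disks tangent to the cones; (C) for $x\notin V$, $\|(Dg|T_x\Delta^{cu})^{-1}\|<\sigma_2$ and $\|Dg|T_x\Delta^{cs}\|<\sigma_2$; (D) for $x\in V$, $\|(Dg|T_x\Delta^{cu})^{-1}\|<1+\delta_0$ and $\|Dg|T_x\Delta^{cs}\|<1+\delta_0$. $f$ is a $C^2$ diffeomorphism satisfying (A)–(D); $T$ is a $C^2$-neighbourhood of $f$ in which every map satisfies (A)–(D); $f_t=t$ for $t\in T$; $\theta_\varepsilon$ are probabilities on $T$; $f^n_{\underline t}=t_n\circ\cdots\circ t_1$ for $\underline t\in T^{\mathbb N}$; $m$ is Lebesgue measure on $\Delta^{cu}$ normalized to $m(\Delta^{cu})=1$. *)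

theory Defs
  imports "HOL-Analysis.Analysis" "HOL-Probability.Probability"
begin

text \<open>The torus T^d = R^d / Z^d is modelled through lifts: points are vectors
  in real^'d, subsets of the torus are Z^d-periodic subsets of real^'d (their
  preimages under the projection pi), maps of the torus are represented by lifts
  R^d -> R^d.\<close>

definition Zd :: "(real^'d) set" where
  "Zd = {k. \<forall>i. k $ i \<in> \<int>}"

definition zperiodic :: "(real^'d) set \<Rightarrow> bool" where
  "zperiodic S \<longleftrightarrow> (\<forall>x k. k \<in> Zd \<longrightarrow> (x \<in> S \<longleftrightarrow> x + k \<in> S))"

text \<open>Open unit cube with corner c, and the preimage under pi of its projection pi(K).\<close>
definition unit_cube :: "real^'d \<Rightarrow> (real^'d) set" where
  "unit_cube c = {x. \<forall>i. c $ i < x $ i \<and> x $ i < c $ i + 1}"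

definition proj_pre :: "(real^'d) set \<Rightarrow> (real^'d) set" where
  "proj_pre K = {x. \<exists>k\<in>Zd. x + k \<in> K}"

definition stable_sp :: "real^'d^'d \<Rightarrow> (real^'d) set" where
  "stable_sp A = {v. (\<lambda>n. (((*v) A) ^^ n) v) \<longlonglongrightarrow> 0}"

definition unstable_sp :: "real^'d^'d \<Rightarrow> (real^'d) set" where
  "unstable_sp A = {v. (\<lambda>n. (((*v) (matrix_inv A)) ^^ n) v) \<longlonglongrightarrow> 0}"

text \<open>Linear Anosov automorphism of the torus: integer matrix, |det| = 1, hyperbolic
  (R^d = E^s + E^u, equivalently no eigenvalue of modulus one).\<close>
definition linear_anosov :: "real^'d^'d \<Rightarrow> bool" where
  "linear_anosov A \<longleftrightarrow> (\<forall>i j. A $ i $ j \<in> \<int>) \<and> \<bar>det A\<bar> = 1 \<and>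
     (\<forall>v. \<exists>a b. a \<in> stable_sp A \<and> b \<in> unstable_sp A \<and> v = a + b)"

definition cone_around :: "real \<Rightarrow> (real^'d) set \<Rightarrow> (real^'d) set \<Rightarrow> (real^'d) set" where
  "cone_around a E F = {u + w |u w. u \<in> E \<and> w \<in> F \<and> norm w \<le> a * norm u}"

definition C2_with ::
  "(real^'d \<Rightarrow> real^'d) \<Rightarrow> (real^'d \<Rightarrow> ((real^'d) \<Rightarrow>\<^sub>L (real^'d)))
     \<Rightarrow> (real^'d \<Rightarrow> ((real^'d) \<Rightarrow>\<^sub>L ((real^'d) \<Rightarrow>\<^sub>L (real^'d)))) \<Rightarrow> bool" where
  "C2_with g D D2 \<longleftrightarrow> (\<forall>x. (g has_derivative blinfun_apply (D x)) (at x)) \<and>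
     (\<forall>x. (D has_derivative blinfun_apply (D2 x)) (at x)) \<and> continuous_on UNIV D2"

definition torus_C2_diffeo :: "(real^'d \<Rightarrow> real^'d) \<Rightarrow> bool" where
  "torus_C2_diffeo g \<longleftrightarrow>
     (\<exists>M::real^'d^'d. (\<forall>i j. M $ i $ j \<in> \<int>) \<and> \<bar>det M\<bar> = 1 \<and>
        (\<forall>x k. k \<in> Zd \<longrightarrow> g (x + k) = g x + M *v k)) \<and>
     bij g \<and> (\<exists>D D2. C2_with g D D2) \<and>
     (\<forall>x. bij (frechet_derivative g (at x)))"

definition C2_close :: "(real^'d \<Rightarrow> real^'d) \<Rightarrow> (real^'d \<Rightarrow> real^'d) \<Rightarrow> real \<Rightarrow> bool" where
  "C2_close f g e \<longleftrightarrow> (\<exists>Df D2f Dg D2g. C2_with f Df D2f \<and> C2_with g Dg D2g \<and>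
     (\<forall>x. dist (f x) (g x) < e \<and> norm (Df x - Dg x) < e \<and> norm (D2f x - D2g x) < e))"

definition C2_nbhd :: "(real^'d \<Rightarrow> real^'d) set \<Rightarrow> (real^'d \<Rightarrow> real^'d) \<Rightarrow> bool" where
  "C2_nbhd T f \<longleftrightarrow> f \<in> T \<and> (\<forall>g\<in>T. torus_C2_diffeo g) \<and>
     (\<exists>e>0. \<forall>g. torus_C2_diffeo g \<and> C2_close f g e \<longrightarrow> g \<in> T)"

definition restr_norm :: "(real^'d \<Rightarrow> real^'d) \<Rightarrow> (real^'d) set \<Rightarrow> real" where
  "restr_norm L E = Sup {norm (L v) / norm v |v. v \<in> E \<and> v \<noteq> 0}"

definition restr_inv_norm :: "(real^'d \<Rightarrow> real^'d) \<Rightarrow> (real^'d) set \<Rightarrow> real" where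
  "restr_inv_norm L E = Sup {norm v / norm (L v) |v. v \<in> E \<and> v \<noteq> 0}"

text \<open>k-dimensional volume factor of a linear map M : R^k -> R^d
  (square root of the Gram determinant).\<close>
definition jac :: "(real^'k \<Rightarrow> real^'d) \<Rightarrow> real" where
  "jac M = sqrt (det (transpose (matrix M) ** matrix M))"

text \<open>|det (L | range M)| for an injective linear M parametrising the plane range M.\<close>
definition restr_det :: "(real^'d \<Rightarrow> real^'d) \<Rightarrow> (real^'k \<Rightarrow> real^'d) \<Rightarrow> real" where
  "restr_det L M = jac (L \<circ> M) / jac M"

definition tangent_plane :: "(real^'d \<Rightarrow> (real^'d) set) \<Rightarrow> real^'d \<Rightarrow> (real^'k \<Rightarrow> real^'d) \<Rightarrow> bool" where
  "tangent_plane C x M \<longleftrightarrow> linear M \<and> inj M \<and> range M \<subseteq> C x"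

text \<open>Conditions (A)--(D) on a map g (lift), for cone fields Ccu, Ccs, whose
  cu-planes have dimension CARD('u) and cs-planes dimension CARD('s).\<close>
definition cond_A :: "(real^'d \<Rightarrow> (real^'d) set) \<Rightarrow> (real^'d \<Rightarrow> (real^'d) set) \<Rightarrow> (real^'d \<Rightarrow> real^'d) \<Rightarrow> bool" where
  "cond_A Ccu Ccs g \<longleftrightarrow> (\<forall>x. frechet_derivative g (at x) ` Ccu x \<subseteq> Ccu (g x)) \<and>
     (\<forall>x v. frechet_derivative g (at x) v \<in> Ccs (g x) \<longrightarrow> v \<in> Ccs x)"

definition cond_B :: "'u::finite itself \<Rightarrow> 's::finite itself \<Rightarrow> (real^'d \<Rightarrow> (real^'d) set) \<Rightarrow> (real^'d \<Rightarrow> (real^'d) set) \<Rightarrow> real \<Rightarrow> (real^'d \<Rightarrow> real^'d) \<Rightarrow> bool" where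
  "cond_B _ _ Ccu Ccs \<sigma>1 g \<longleftrightarrow>
     (\<forall>x (M::real^'u \<Rightarrow> real^'d). tangent_plane Ccu x M \<longrightarrow> restr_det (frechet_derivative g (at x)) M > \<sigma>1) \<and>
     (\<forall>x (M::real^'s \<Rightarrow> real^'d). tangent_plane Ccs x M \<longrightarrow> restr_det (frechet_derivative g (at x)) M < inverse \<sigma>1)"

text \<open>Bounds as in (C) (with constant s on the points of X) -- used for (C) with
  X = complement of V, s = sigma2 and for (D) with X = V, s = 1 + delta0.\<close>
definition cond_bound :: "'u::finite itself \<Rightarrow> 's::finite itself \<Rightarrow> (real^'d \<Rightarrow> (real^'d) set) \<Rightarrow> (real^'d \<Rightarrow> (real^'d) set) \<Rightarrow> (real^'d) set \<Rightarrow> real \<Rightarrow> (real^'d \<Rightarrow> real^'d) \<Rightarrow> bool" where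
  "cond_bound _ _ Ccu Ccs X s g \<longleftrightarrow>
     (\<forall>x\<in>X. \<forall>M::real^'u \<Rightarrow> real^'d. tangent_plane Ccu x M \<longrightarrow> restr_inv_norm (frechet_derivative g (at x)) (range M) < s) \<and>
     (\<forall>x\<in>X. \<forall>M::real^'s \<Rightarrow> real^'d. tangent_plane Ccs x M \<longrightarrow> restr_norm (frechet_derivative g (at x)) (range M) < s)"

text \<open>Random compositions f^n_t = t_n o ... o t_1; here t 0 plays the role of t_1.\<close>
primrec rcomp :: "(nat \<Rightarrow> ('a \<Rightarrow> 'a)) \<Rightarrow> nat \<Rightarrow> 'a \<Rightarrow> 'a" where
  "rcomp t 0 = id"
| "rcomp t (Suc n) = t n \<circ> rcomp t n"

text \<open>A disk tangent to the cone field C: a C^1 embedding phi of the closed ball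
  cball 0 r of R^k into the torus (injective modulo Z^d) whose tangent planes lie in C.\<close>
definition tangent_disk :: "(real^'d \<Rightarrow> (real^'d) set) \<Rightarrow> (real^'k \<Rightarrow> real^'d) \<Rightarrow> real \<Rightarrow> bool" where
  "tangent_disk C \<phi> r \<longleftrightarrow> r > 0 \<and>
     (\<exists>U D. open U \<and> cball 0 r \<subseteq> U \<and> continuous_on U D \<and>
        (\<forall>s\<in>U. (\<phi> has_derivative blinfun_apply (D s)) (at s))) \<and>
     (\<forall>s\<in>cball 0 r. \<forall>s'\<in>cball 0 r. \<phi> s - \<phi> s' \<in> Zd \<longrightarrow> s = s') \<and>
     (\<forall>s\<in>cball 0 r. tangent_plane C (\<phi> s) (frechet_derivative \<phi> (at s)))"

text \<open>Normalised Lebesgue (k-dimensional volume) measure m on the disk,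
  pulled back to the parameter ball: density jac(D phi) w.r.t. Lebesgue measure.\<close>
definition disk_measure :: "(real^'k \<Rightarrow> real^'d) \<Rightarrow> real \<Rightarrow> (real^'k) measure" where
  "disk_measure \<phi> r =
     (let \<mu> = density (restrict_space lborel (cball 0 r)) (\<lambda>s. ennreal (jac (frechet_derivative \<phi> (at s))))
      in scale_measure (1 / emeasure \<mu> (space \<mu>)) \<mu>)"

text \<open>The sum  sum_{j<n} log ||(D t_{j+1} | T_{f^j_t x} Delta_j(t))^{-1}||  at x = phi s,
  where T Delta_j(t) at f^j_t(phi s) is the image of D(f^j_t o phi)(s).\<close>
definition log_sum :: "(nat \<Rightarrow> (real^'d \<Rightarrow> real^'d)) \<Rightarrow> (real^'k \<Rightarrow> real^'d) \<Rightarrow> nat \<Rightarrow> real^'k \<Rightarrow> real" where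
  "log_sum t \<phi> n s = (\<Sum>j<n. ln (restr_inv_norm (frechet_derivative (t j) (at (rcomp t j (\<phi> s))))
                                   (range (frechet_derivative (\<lambda>s'. rcomp t j (\<phi> s')) (at s)))))"

end

theory Submission
  imports Defs
begin


lemma continuous_on_det_entries:
  fixes A :: "'a::topological_space \<Rightarrow> real^'n^'n"
  assumes "\<And>i j. continuous_on S (\<lambda>s. A s $ i $ j)"
  shows "continuous_on S (\<lambda>s. det (A s))"
  unfolding det_def by (intro continuous_intros assms)

lemma continuous_on_jac:
  fixes D :: "'a::topological_space \<Rightarrow> (real^'k) \<Rightarrow>\<^sub>L (real^'d)"
  assumes "continuous_on S D"
  shows "continuous_on S (\<lambda>s. jac (blinfun_apply (D s)))"
  unfolding jac_def matrix_matrix_mult_def transpose_def matrix_def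
  by (simp, intro continuous_intros continuous_on_det_entries assms) 

lemma gram_quad:
  fixes A :: "real^'k^'d"
  shows "x \<bullet> ((transpose A ** A) *v x) = (A *v x) \<bullet> (A *v x)"
  by (simp add: matrix_vector_mul_assoc[symmetric] dot_lmul_matrix[symmetric] inner_commute)

lemma jac_pos:
  fixes M :: "real^'k \<Rightarrow> real^'d"
  assumes lin: "linear M" and inj: "inj M"
  shows "jac M > 0"
proof -
  define G where "G = transpose (matrix M) ** matrix M"
  define A where "A = (\<lambda>l::real. (1 - l) *\<^sub>R G + l *\<^sub>R mat 1)"
  have nz: "det (A l) \<noteq> 0" if l: "0 \<le> l" "l \<le> 1" for l
  proof -
    have "inj ((*v) (A l))"
    proof (rule linear_injective_0[THEN iffD2])
      show "linear ((*v) (A l))" by (simp add: matrix_vector_mul_linear)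
      show "\<forall>x. A l *v x = 0 \<longrightarrow> x = 0"
      proof (intro allI impI)
        fix x assume h: "A l *v x = 0"
        have "x \<bullet> (A l *v x) = (1 - l) * ((M x) \<bullet> (M x)) + l * (x \<bullet> x)"
          unfolding A_def G_def
          by (simp add: matrix_vector_mult_add_rdistrib inner_add_right gram_quad scaleR_matrix_vector_assoc[symmetric] matrix_works[OF lin[unfolded linear_matrix_vector_mul_eq[symmetric]]])
        then have e: "(1 - l) * ((M x) \<bullet> (M x)) + l * (x \<bullet> x) = 0" using h by simp
        have "(1 - l) * ((M x) \<bullet> (M x)) \<ge> 0" "l * (x \<bullet> x) \<ge> 0" using l by auto
        then have e1: "(1 - l) * ((M x) \<bullet> (M x)) = 0" and e2: "l * (x \<bullet> x) = 0" using e by linarith+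
        show "x = 0"
        proof (cases "l = 0")
          case True
          then have "M x = 0" using e1 by simp
          then show ?thesis using inj lin by (metis linear_0 injD)
        next
          case False then show ?thesis using e2 by simp
        qed
      qed
    qed
    then show ?thesis
      using det_nz_iff_inj[of "(*v) (A l)"] by (simp add: matrix_vector_mul_linear matrix_of_matrix_vector_mul)
  qed
  have cont: "continuous_on {0..1} (\<lambda>l. det (A l))"
    unfolding A_def by (intro continuous_on_det_entries) (simp, intro continuous_intros)
  have "det (A 1) = 1" unfolding A_def by simp
  have "det (A 0) > 0"
  proof (rule ccontr)
    assume "\<not> det (A 0) > 0"
    then have "det (A 0) \<le> 0" by simp
    then obtain l where "0 \<le> l" "l \<le> 1" "det (A l) = 0"
      using IVT'[of "\<lambda>l. det (A l)" 0 0 1] cont \<open>det (A 1) = 1\<close> by auto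
    then show False using nz by blast
  qed
  then show ?thesis unfolding jac_def A_def G_def by simp
qed

lemma disk_basic:
  fixes \<phi> :: "real^'k \<Rightarrow> real^'d"
  assumes td: "tangent_disk C \<phi> r"
  shows "space (disk_measure \<phi> r) = cball 0 r"
    and "sets (disk_measure \<phi> r) = sets (restrict_space borel (cball 0 r))"
    and "prob_space (disk_measure \<phi> r)"
proof -
  obtain U D where U: "open U" "cball 0 r \<subseteq> U" and Dc: "continuous_on U D"
    and Dd: "\<And>s. s\<in>U \<Longrightarrow> (\<phi> has_derivative blinfun_apply (D s)) (at s)"
    using td unfolding tangent_disk_def by blast
  have r: "r > 0" using td unfolding tangent_disk_def by simp
  have tp: "\<And>s. s \<in> cball 0 r \<Longrightarrow> tangent_plane C (\<phi> s) (frechet_derivative \<phi> (at s))"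
    using td unfolding tangent_disk_def by blast
  have fd: "frechet_derivative \<phi> (at s) = blinfun_apply (D s)" if "s \<in> cball 0 r" for s
    using Dd[of s] U that frechet_derivative_at by (metis subsetD)
  define f where "f = (\<lambda>s. ennreal (jac (frechet_derivative \<phi> (at s))))"
  define \<mu> where "\<mu> = density (restrict_space lborel (cball 0 r)) f"
  have dm: "disk_measure \<phi> r = scale_measure (1 / emeasure \<mu> (space \<mu>)) \<mu>"
    unfolding disk_measure_def \<mu>_def f_def Let_def by simp
  have sp\<mu>: "space \<mu> = cball 0 r" unfolding \<mu>_def by (simp add: space_restrict_space)
  show sp: "space (disk_measure \<phi> r) = cball 0 r" unfolding dm by (simp add: space_scale_measure sp\<mu>)
  have setsR: "sets (restrict_space lborel (cball 0 r)) = sets (restrict_space borel (cball (0::real^'k) r))"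
    by (rule sets_restrict_space_cong) simp
  show sets: "sets (disk_measure \<phi> r) = sets (restrict_space borel (cball 0 r))"
    unfolding dm \<mu>_def by (simp add: setsR)
  have jc: "continuous_on (cball 0 r) (\<lambda>s. jac (blinfun_apply (D s)))"
    using continuous_on_jac[OF continuous_on_subset[OF Dc U(2)]] .
  have jpos: "jac (blinfun_apply (D s)) > 0" if "s \<in> cball 0 r" for s
    using tp[OF that] fd[OF that] unfolding tangent_plane_def by (metis jac_pos)
  obtain smin where smin: "smin \<in> cball 0 r" "\<And>s. s \<in> cball 0 r \<Longrightarrow> jac (blinfun_apply (D smin)) \<le> jac (blinfun_apply (D s))"
    using continuous_attains_inf[OF compact_cball _ jc] r by (metis cball_eq_empty not_less order_less_le)
  obtain smax where smax: "smax \<in> cball 0 r" "\<And>s. s \<in> cball 0 r \<Longrightarrow> jac (blinfun_apply (D s)) \<le> jac (blinfun_apply (D smax))"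
    using continuous_attains_sup[OF compact_cball _ jc] r by (metis cball_eq_empty not_less order_less_le)
  define a where "a = jac (blinfun_apply (D smin))"
  define b where "b = jac (blinfun_apply (D smax))"
  have a: "a > 0" unfolding a_def using jpos smin by blast
  have fmeas: "f \<in> borel_measurable (restrict_space lborel (cball 0 r))"
  proof -
    have "(\<lambda>s. ennreal (jac (blinfun_apply (D s)))) \<in> borel_measurable (restrict_space borel (cball 0 r))"
      by (intro measurable_compose[OF borel_measurable_continuous_on_restrict[OF jc]]) simp
    then have "(\<lambda>s. ennreal (jac (blinfun_apply (D s)))) \<in> borel_measurable (restrict_space lborel (cball 0 r))"
      using measurable_cong_sets[OF setsR refl] by blast
    then show ?thesis
      by (rule measurable_cong[THEN iffD1, rotated]) (simp add: f_def fd space_restrict_space)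
  qed
  have Z: "emeasure \<mu> (space \<mu>) = \<integral>\<^sup>+ s. f s * indicator (cball 0 r) s \<partial>lborel"
  proof -
    have "emeasure \<mu> (space \<mu>) = \<integral>\<^sup>+ s. f s * indicator (cball 0 r) s \<partial>restrict_space lborel (cball 0 r)"
      unfolding \<mu>_def sp\<mu>[unfolded \<mu>_def]
      by (rule emeasure_density[OF fmeas]) (use sets.top[of "restrict_space lborel (cball (0::real^'k) r)"] in \<open>simp add: space_restrict_space\<close>)
    also have "\<dots> = \<integral>\<^sup>+ s. (f s * indicator (cball 0 r) s) * indicator (cball 0 r) s \<partial>lborel"
      by (rule nn_integral_restrict_space) simp
    also have "\<dots> = \<integral>\<^sup>+ s. f s * indicator (cball 0 r) s \<partial>lborel"
      by (intro nn_integral_cong) (simp split: split_indicator)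
    finally show ?thesis .
  qed
  have "\<integral>\<^sup>+ s. f s * indicator (cball (0::real^'k) r) s \<partial>lborel \<le> \<integral>\<^sup>+ s. ennreal b * indicator (cball (0::real^'k) r) s \<partial>lborel"
    by (intro nn_integral_mono) (auto simp: indicator_def f_def fd b_def intro!: ennreal_leI smax)
  also have "\<dots> = ennreal b * emeasure lborel (cball (0::real^'k) r)" by (rule nn_integral_cmult_indicator) simp
  also have "\<dots> < \<infinity>" using emeasure_lborel_cball_finite[of "0::real^'k" r] by (simp add: ennreal_mult_less_top)
  finally have Zfin: "emeasure \<mu> (space \<mu>) < \<infinity>" using Z by simp
  have "ennreal a * emeasure lborel (cball (0::real^'k) r) = \<integral>\<^sup>+ s. ennreal a * indicator (cball (0::real^'k) r) s \<partial>lborel" by (rule nn_integral_cmult_indicator[symmetric]) simp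
  also have "\<dots> \<le> \<integral>\<^sup>+ s. f s * indicator (cball (0::real^'k) r) s \<partial>lborel"
    by (intro nn_integral_mono) (auto simp: indicator_def f_def fd a_def intro!: ennreal_leI smin)
  finally have Zge: "ennreal a * emeasure lborel (cball (0::real^'k) r) \<le> emeasure \<mu> (space \<mu>)" using Z by simp
  have "emeasure lborel (cball (0::real^'k) r) > 0"
    using r by (simp add: emeasure_cball)
  then have "ennreal a * emeasure lborel (cball (0::real^'k) r) > 0" using a by (simp add: ennreal_zero_less_mult_iff)
  then have Zpos: "emeasure \<mu> (space \<mu>) > 0" using Zge by (meson less_le_trans)
  show "prob_space (disk_measure \<phi> r)"
  proof
    show "emeasure (disk_measure \<phi> r) (space (disk_measure \<phi> r)) = 1"
      unfolding dm using Zfin Zpos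
      by (simp add: space_scale_measure ennreal_divide_times)
  qed
qed



lemma exists_nz_vec: "\<exists>u::real^'k. u \<noteq> 0"
  by (rule exI[of _ "vec 1"]) (simp add: vec_eq_iff)

lemma rin_basic:
  fixes L :: "real^'d \<Rightarrow> real^'d" and M :: "real^'k \<Rightarrow> real^'d"
  assumes lL: "linear L" and iL: "inj L" and lM: "linear M" and iM: "inj M"
  shows "restr_inv_norm L (range M) = Sup ((\<lambda>u. norm (M u) / norm (L (M u))) ` (UNIV - {0}))"
    and "bdd_above ((\<lambda>u. norm (M u) / norm (L (M u))) ` (UNIV - {0}))"
    and "\<exists>B>0. \<forall>u. norm (M u) / norm (L (M u)) \<le> B"
    and "restr_inv_norm L (range M) > 0"
proof -
  let ?h = "\<lambda>u. norm (M u) / norm (L (M u))"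
  have X: "{norm v / norm (L v) |v. v \<in> range M \<and> v \<noteq> 0} = ?h ` (UNIV - {0})"
  proof -
    have M0: "M u = 0 \<longleftrightarrow> u = 0" for u using iM lM by (metis linear_0 injD)
    show ?thesis
    proof (rule set_eqI, rule iffI)
      fix x assume "x \<in> {norm v / norm (L v) |v. v \<in> range M \<and> v \<noteq> 0}"
      then obtain u where "x = ?h u" "M u \<noteq> 0" by blast
      then show "x \<in> ?h ` (UNIV - {0})" using M0 by blast
    next
      fix x assume "x \<in> ?h ` (UNIV - {0})"
      then obtain u where "x = ?h u" "u \<noteq> 0" by blast
      then show "x \<in> {norm v / norm (L v) |v. v \<in> range M \<and> v \<noteq> 0}" using M0 by blast
    qed
  qed
  show e: "restr_inv_norm L (range M) = Sup (?h ` (UNIV - {0}))"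
    unfolding restr_inv_norm_def X ..
  obtain B where B: "B > 0" "\<And>x. B * norm x \<le> norm (L x)" using linear_inj_bounded_below_pos[OF lL iL] by blast
  have hb: "?h u \<le> 1 / B" for u
  proof (cases "M u = 0")
    case True then show ?thesis using B by simp
  next
    case False
    then have pos: "norm (M u) > 0" by simp
    have le: "B * norm (M u) \<le> norm (L (M u))" by (rule B(2))
    then have "norm (L (M u)) > 0" using B(1) pos by (meson mult_pos_pos less_le_trans)
    then show ?thesis using B(1) le by (simp add: divide_simps mult.commute)
  qed
  then show "\<exists>B>0. \<forall>u. ?h u \<le> B" using B by (metis zero_less_divide_1_iff)
  show bdd: "bdd_above (?h ` (UNIV - {0}))" using hb by (intro bdd_aboveI[of _ "1/B"]) auto
  obtain u :: "real^'k" where u: "u \<noteq> 0" using exists_nz_vec by blast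
  have "M u \<noteq> 0" using u iM lM by (metis linear_0 injD)
  moreover have "L (M u) \<noteq> 0" using calculation iL lL by (metis linear_0 injD)
  ultimately have "?h u > 0" by simp
  also have "?h u \<le> Sup (?h ` (UNIV - {0}))" using bdd u by (intro cSup_upper) auto
  finally show "restr_inv_norm L (range M) > 0" using e by simp
qed

lemma rin_countable:
  fixes L :: "real^'d \<Rightarrow> real^'d" and M :: "real^'k \<Rightarrow> real^'d" and Dn :: "(real^'k) set"
  assumes lL: "linear L" and iL: "inj L" and lM: "linear M" and iM: "inj M"
    and dense: "\<And>W. open W \<Longrightarrow> W \<noteq> {} \<Longrightarrow> \<exists>d\<in>Dn. d \<in> W"
  shows "restr_inv_norm L (range M) = Sup ((\<lambda>u. norm (M u) / norm (L (M u))) ` (Dn - {0}))"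
proof -
  let ?h = "\<lambda>u. norm (M u) / norm (L (M u))"
  note rb = rin_basic[OF lL iL lM iM]
  have opn: "open (UNIV - {0::real^'k})" by (simp add: open_Diff)
  obtain d0 where d0: "d0 \<in> Dn" "d0 \<in> UNIV - {0}"
  proof -
    have "UNIV - {0::real^'k} \<noteq> {}" using exists_nz_vec by blast
    from dense[OF opn this] show ?thesis using that by blast
  qed
  have ne: "?h ` (Dn - {0}) \<noteq> {}" using d0 by blast
  have bdd': "bdd_above (?h ` (Dn - {0}))" using rb(2) by (rule bdd_above_mono) blast
  have M0: "M u = 0 \<longleftrightarrow> u = 0" for u using iM lM by (metis linear_0 injD)
  have L0: "L v = 0 \<longleftrightarrow> v = 0" for v using iL lL by (metis linear_0 injD)
  have cM: "continuous_on A M" for A using lM by (simp add: linear_continuous_on linear_conv_bounded_linear)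
  have cL: "continuous_on A L" for A using lL by (simp add: linear_continuous_on linear_conv_bounded_linear)
  have ch: "continuous_on (UNIV - {0}) ?h"
    proof (rule continuous_on_divide)
    show "continuous_on (UNIV - {0}) (\<lambda>u. norm (M u))" by (rule continuous_on_norm[OF cM])
    have c1: "continuous_on (UNIV - {0}) (L \<circ> M)" by (rule continuous_on_compose[OF cM cL])
    show "continuous_on (UNIV - {0}) (\<lambda>u. norm (L (M u)))" using continuous_on_norm[OF c1] by (simp add: o_def)
    show "\<forall>x\<in>UNIV - {0}. norm (L (M x)) \<noteq> 0" by (simp add: M0 L0)
  qed
  have le1: "Sup (?h ` (Dn - {0})) \<le> Sup (?h ` (UNIV - {0}))"
    by (rule cSup_subset_mono[OF ne rb(2)]) blast
  have le2: "Sup (?h ` (UNIV - {0})) \<le> Sup (?h ` (Dn - {0}))"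
  proof (rule cSup_least)
    show "?h ` (UNIV - {0}) \<noteq> {}" using d0 by blast
    fix x assume "x \<in> ?h ` (UNIV - {0})"
    then obtain u where u: "u \<noteq> 0" "x = ?h u" by blast
    show "x \<le> Sup (?h ` (Dn - {0}))"
    proof (rule ccontr)
      assume "\<not> ?thesis"
      then have lt: "Sup (?h ` (Dn - {0})) < ?h u" using u by simp
      define W where "W = ?h -` {Sup (?h ` (Dn - {0}))<..} \<inter> (UNIV - {0})"
      have "open W" unfolding W_def
        by (rule continuous_on_open_vimage[OF opn, THEN iffD1, OF ch, rule_format]) simp
      moreover have "u \<in> W" using u lt unfolding W_def by simp
      ultimately have "\<exists>d\<in>Dn. d \<in> W" using dense by blast
      then obtain d where d: "d \<in> Dn" "d \<in> W" by blast
      then have "?h d \<le> Sup (?h ` (Dn - {0}))" using bdd' unfolding W_def by (intro cSup_upper) auto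
      then show False using d unfolding W_def by simp
    qed
  qed
  show ?thesis using le1 le2 rb(1) by simp
qed

lemma linear_blinfun[simp]: "linear (blinfun_apply f)"
  using blinfun.bounded_linear_right bounded_linear_def by blast

lemma rin_measurable:
  fixes L :: "'a::topological_space \<Rightarrow> ((real^'d) \<Rightarrow>\<^sub>L (real^'d))" and M :: "'a \<Rightarrow> ((real^'k) \<Rightarrow>\<^sub>L (real^'d))"
  assumes cL: "continuous_on S L" and cM: "continuous_on S M"
    and inj: "\<And>s. s \<in> S \<Longrightarrow> inj (blinfun_apply (L s)) \<and> inj (blinfun_apply (M s))"
  shows "(\<lambda>s. restr_inv_norm (blinfun_apply (L s)) (range (blinfun_apply (M s)))) \<in> borel_measurable (restrict_space borel S)"
proof -
  obtain Dn :: "(real^'k) set" where Dn: "countable Dn" "\<And>X. open X \<Longrightarrow> X \<noteq> {} \<Longrightarrow> \<exists>d \<in> Dn. d \<in> X"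
    using countable_dense_setE by blast
  define F where "F = (\<lambda>u s. norm (blinfun_apply (M s) u) / norm (blinfun_apply (L s) (blinfun_apply (M s) u)))"
  have eq: "restr_inv_norm (blinfun_apply (L s)) (range (blinfun_apply (M s))) = (SUP u\<in>Dn - {0}. F u s)"
    if "s \<in> space (restrict_space borel S)" for s
  proof -
    have s: "s \<in> S" using that by (simp add: space_restrict_space)
    show ?thesis unfolding F_def
      by (rule rin_countable) (use inj[OF s] Dn(2) in \<open>auto\<close>)
  qed
  have meas: "(\<lambda>s. SUP u\<in>Dn - {0}. F u s) \<in> borel_measurable (restrict_space borel S)"
  proof (rule borel_measurable_cSUP)
    show "countable (Dn - {0})" using Dn(1) by simp
    fix u :: "real^'k"
    have c1: "continuous_on S (\<lambda>s. norm (blinfun_apply (M s) u))"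
      by (intro continuous_intros cM)
    have c2: "continuous_on S (\<lambda>s. norm (blinfun_apply (L s) (blinfun_apply (M s) u)))"
      by (intro continuous_intros cM cL)
    have [measurable]: "(\<lambda>s. norm (blinfun_apply (M s) u)) \<in> borel_measurable (restrict_space borel S)"
      by (rule borel_measurable_continuous_on_restrict[OF c1])
    have [measurable]: "(\<lambda>s. norm (blinfun_apply (L s) (blinfun_apply (M s) u))) \<in> borel_measurable (restrict_space borel S)"
      by (rule borel_measurable_continuous_on_restrict[OF c2])
    show "F u \<in> borel_measurable (restrict_space borel S)" unfolding F_def by measurable
  next
    fix s assume "s \<in> space (restrict_space borel S)"
    then have s: "s \<in> S" by (simp add: space_restrict_space)
    have "bdd_above ((\<lambda>u. norm (blinfun_apply (M s) u) / norm (blinfun_apply (L s) (blinfun_apply (M s) u))) ` (UNIV - {0}))"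
      by (rule rin_basic(2)) (use inj[OF s] in \<open>auto\<close>)
    then show "bdd_above ((\<lambda>u. F u s) ` (Dn - {0}))" unfolding F_def by (rule bdd_above_mono) blast
  qed
  show ?thesis using meas by (rule measurable_cong[THEN iffD1, rotated]) (simp add: eq)
qed



primrec dchain :: "(nat \<Rightarrow> real^'d \<Rightarrow> ((real^'d) \<Rightarrow>\<^sub>L (real^'d))) \<Rightarrow> (nat \<Rightarrow> real^'d \<Rightarrow> real^'d)
   \<Rightarrow> (real^'k \<Rightarrow> real^'d) \<Rightarrow> (real^'k \<Rightarrow> ((real^'k) \<Rightarrow>\<^sub>L (real^'d))) \<Rightarrow> nat \<Rightarrow> real^'k \<Rightarrow> ((real^'k) \<Rightarrow>\<^sub>L (real^'d))" where
  "dchain Dt t \<phi> D0 0 s = D0 s"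
| "dchain Dt t \<phi> D0 (Suc j) s = Dt j (rcomp t j (\<phi> s)) o\<^sub>L dchain Dt t \<phi> D0 j s"

lemma rcomp_Suc_apply: "rcomp t (Suc j) x = t j (rcomp t j x)" by simp

lemma dchain_deriv:
  assumes dt: "\<And>j x. (t j has_derivative blinfun_apply (Dt j x)) (at x)"
    and d0: "(\<phi> has_derivative blinfun_apply (D0 s)) (at s)"
  shows "((\<lambda>s. rcomp t j (\<phi> s)) has_derivative blinfun_apply (dchain Dt t \<phi> D0 j s)) (at s)"
proof (induction j)
  case 0
  then show ?case using d0 by simp
next
  case (Suc j)
  have "((t j) \<circ> (\<lambda>s. rcomp t j (\<phi> s)) has_derivative blinfun_apply (Dt j (rcomp t j (\<phi> s))) \<circ> blinfun_apply (dchain Dt t \<phi> D0 j s)) (at s)"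
    by (rule diff_chain_at[OF Suc dt])
  then show ?case by (simp add: o_def)
qed

lemma dchain_cont:
  assumes dt: "\<And>j x. (t j has_derivative blinfun_apply (Dt j x)) (at x)"
    and cDt: "\<And>j. continuous_on UNIV (Dt j)"
    and d0: "\<And>s. s \<in> U \<Longrightarrow> (\<phi> has_derivative blinfun_apply (D0 s)) (at s)"
    and cD0: "continuous_on U D0"
  shows "continuous_on U (\<lambda>s. rcomp t j (\<phi> s))" and "continuous_on U (dchain Dt t \<phi> D0 j)"
proof -
  show cF: "continuous_on U (\<lambda>s. rcomp t j (\<phi> s))" for j
  proof (rule continuous_at_imp_continuous_on, rule ballI)
    fix s assume "s \<in> U"
    show "isCont (\<lambda>s. rcomp t j (\<phi> s)) s"
      using has_derivative_continuous[OF dchain_deriv[of t Dt \<phi> D0 s j, OF dt d0[OF \<open>s \<in> U\<close>]]] .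
  qed
  show "continuous_on U (dchain Dt t \<phi> D0 j)"
  proof (induction j)
    case 0 then show ?case using cD0 by simp
  next
    case (Suc j)
    have c1: "continuous_on U (\<lambda>s. Dt j (rcomp t j (\<phi> s)))"
      by (rule continuous_on_compose2[OF cDt cF]) simp
    show ?case unfolding dchain.simps
      by (intro continuous_intros c1 Suc)
  qed
qed

lemma dchain_tangent:
  assumes injD: "\<And>j x. inj (blinfun_apply (Dt j x))"
    and cone: "\<And>j x. blinfun_apply (Dt j x) ` C x \<subseteq> C (t j x)"
    and tp0: "tangent_plane C (\<phi> s) (blinfun_apply (D0 s))"
  shows "tangent_plane C (rcomp t j (\<phi> s)) (blinfun_apply (dchain Dt t \<phi> D0 j s))"
proof (induction j)
  case 0 then show ?case using tp0 by simp
next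
  case (Suc j)
  let ?x = "rcomp t j (\<phi> s)"
  have "inj (blinfun_apply (Dt j ?x) \<circ> blinfun_apply (dchain Dt t \<phi> D0 j s))"
    using Suc injD unfolding tangent_plane_def by (blast intro: inj_compose)
  moreover have "range (blinfun_apply (Dt j ?x) \<circ> blinfun_apply (dchain Dt t \<phi> D0 j s)) \<subseteq> C (t j ?x)"
    using Suc cone[of j ?x] unfolding tangent_plane_def by (auto simp: image_subset_iff)
  ultimately show ?case unfolding tangent_plane_def using linear_blinfun[of "Dt j ?x o\<^sub>L dchain Dt t \<phi> D0 j s"] by (simp add: o_def blinfun_compose.rep_eq)
qed



lemma sum_if_card: "(\<Sum>j<(n::nat). if P j then 1 else 0::real) = real (card {j. j < n \<and> P j})"
proof -
  have "(\<Sum>j<n. if P j then 1 else 0::real) = (\<Sum>j\<in>{j. j < n \<and> P j}. 1)"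
    by (rule sum.mono_neutral_cong_right) auto
  then show ?thesis by simp
qed

definition DT :: "(real^'d \<Rightarrow> real^'d) \<Rightarrow> real^'d \<Rightarrow> ((real^'d) \<Rightarrow>\<^sub>L (real^'d))" where
  "DT g = (SOME D. (\<forall>x. (g has_derivative blinfun_apply (D x)) (at x)) \<and> continuous_on UNIV D)"

lemma DT_props:
  assumes "torus_C2_diffeo g"
  shows "\<And>x. (g has_derivative blinfun_apply (DT g x)) (at x)"
    and "continuous_on UNIV (DT g)"
    and "\<And>x. frechet_derivative g (at x) = blinfun_apply (DT g x)"
    and "\<And>x. inj (blinfun_apply (DT g x))"
proof -
  obtain D D2 where C2: "C2_with g D D2" using assms unfolding torus_C2_diffeo_def by blast
  have "(\<forall>x. (g has_derivative blinfun_apply (D x)) (at x)) \<and> continuous_on UNIV D"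
  proof
    show "\<forall>x. (g has_derivative blinfun_apply (D x)) (at x)" using C2 unfolding C2_with_def by blast
    show "continuous_on UNIV D"
      by (rule continuous_at_imp_continuous_on)
         (use C2 in \<open>auto simp: C2_with_def intro: has_derivative_continuous\<close>)
  qed
  then have "\<exists>D. (\<forall>x. (g has_derivative blinfun_apply (D x)) (at x)) \<and> continuous_on UNIV D" by blast
  then have P: "(\<forall>x. (g has_derivative blinfun_apply (DT g x)) (at x)) \<and> continuous_on UNIV (DT g)"
    unfolding DT_def by (rule someI_ex)
  then show d: "\<And>x. (g has_derivative blinfun_apply (DT g x)) (at x)" and "continuous_on UNIV (DT g)" by auto
  show fd: "\<And>x. frechet_derivative g (at x) = blinfun_apply (DT g x)"
    using d frechet_derivative_at by metis
  show "\<And>x. inj (blinfun_apply (DT g x))"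
    using assms fd unfolding torus_C2_diffeo_def by (metis bij_is_inj)
qed

lemma td_unpack:
  fixes \<phi> :: "real^'k \<Rightarrow> real^'d"
  assumes td: "tangent_disk C \<phi> r"
  obtains U D0 where "open U" "cball 0 r \<subseteq> U" "continuous_on U D0"
    "\<And>s. s \<in> U \<Longrightarrow> (\<phi> has_derivative blinfun_apply (D0 s)) (at s)"
    "\<And>s. s \<in> cball 0 r \<Longrightarrow> tangent_plane C (\<phi> s) (blinfun_apply (D0 s))" "r > 0"
proof -
  obtain U D where U: "open U" "cball 0 r \<subseteq> U" and Dc: "continuous_on U D"
    and Dd: "\<And>s. s\<in>U \<Longrightarrow> (\<phi> has_derivative blinfun_apply (D s)) (at s)"
    using td unfolding tangent_disk_def by blast
  have tp: "\<And>s. s \<in> cball 0 r \<Longrightarrow> tangent_plane C (\<phi> s) (frechet_derivative \<phi> (at s))"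
    using td unfolding tangent_disk_def by blast
  have fd: "frechet_derivative \<phi> (at s) = blinfun_apply (D s)" if "s \<in> cball 0 r" for s
    using Dd[of s] U that frechet_derivative_at by (metis subsetD)
  show ?thesis
  proof (rule that[OF U Dc Dd])
    show "\<And>s. s \<in> cball 0 r \<Longrightarrow> tangent_plane C (\<phi> s) (blinfun_apply (D s))" using tp fd by metis
    show "r > 0" using td by (simp add: tangent_disk_def)
  qed auto
qed

lemma log_sum_eq:
  fixes \<phi> :: "real^'k \<Rightarrow> real^'d"
  assumes d0: "(\<phi> has_derivative blinfun_apply (D0 s)) (at s)"
    and tT: "\<And>j. torus_C2_diffeo (t j)"
  shows "log_sum t \<phi> n s = (\<Sum>j<n. ln (restr_inv_norm (blinfun_apply (DT (t j) (rcomp t j (\<phi> s))))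
            (range (blinfun_apply (dchain (\<lambda>j. DT (t j)) t \<phi> D0 j s)))))"
proof -
  have dt: "\<And>j x. (t j has_derivative blinfun_apply (DT (t j) x)) (at x)" using DT_props(1)[OF tT] .
  have "frechet_derivative (\<lambda>s'. rcomp t j (\<phi> s')) (at s) = blinfun_apply (dchain (\<lambda>j. DT (t j)) t \<phi> D0 j s)" for j
    using frechet_derivative_at[OF dchain_deriv[of t "\<lambda>j. DT (t j)" \<phi> D0 s j, OF dt d0]] by simp
  then show ?thesis unfolding log_sum_def using DT_props(3)[OF tT] by simp
qed

lemma key_bound:
  fixes \<phi> :: "real^'u \<Rightarrow> real^'d" and uu :: "'u itself" and ss :: "'s::finite itself"
  assumes TT: "\<And>g. g \<in> T \<Longrightarrow> torus_C2_diffeo g \<and> cond_A Ccu Ccs g \<and> cond_bound uu ss Ccu Ccs (- V) \<sigma>2 g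
        \<and> cond_bound uu ss Ccu Ccs V (1 + \<eta>) g"
    and td: "tangent_disk Ccu \<phi> r" and tT: "\<And>j. t j \<in> T" and s: "s \<in> cball 0 r"
    and \<sigma>2: "0 < \<sigma>2" "\<sigma>2 < 1" and \<eta>: "\<eta> > 0" and BBV: "BB \<inter> V = {}"
    and lc: "ln (1 + \<eta>) = c" and za: "\<zeta> * (- ln \<sigma>2) = 2 * c" and z: "\<zeta> > 0" and c: "c > 0"
    and G: "real (card {j. j < n \<and> rcomp t j (\<phi> s) \<in> BB}) \<ge> \<zeta> * real n"
  shows "log_sum t \<phi> n s \<le> - c * real n"
proof -
  obtain U D0 where U: "open U" "cball 0 r \<subseteq> U" and cD0: "continuous_on U D0"
    and d0: "\<And>s. s \<in> U \<Longrightarrow> (\<phi> has_derivative blinfun_apply (D0 s)) (at s)"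
    and tp0: "\<And>s. s \<in> cball 0 r \<Longrightarrow> tangent_plane Ccu (\<phi> s) (blinfun_apply (D0 s))" and "r > 0"
    by (rule td_unpack[OF td], rule that, assumption+)
  have sU: "s \<in> U" using s U by blast
  have tor: "\<And>j. torus_C2_diffeo (t j)" using TT tT by blast
  define Dt where "Dt = (\<lambda>j. DT (t j))"
  define x where "x = (\<lambda>j. rcomp t j (\<phi> s))"
  define R where "R = (\<lambda>j. restr_inv_norm (blinfun_apply (Dt j (x j))) (range (blinfun_apply (dchain Dt t \<phi> D0 j s))))"
  have ls: "log_sum t \<phi> n s = (\<Sum>j<n. ln (R j))"
    unfolding R_def Dt_def x_def by (rule log_sum_eq[of \<phi> D0 s t n, OF d0[OF sU] tor])
  define a where "a = - ln \<sigma>2"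
  have a: "a > 0" unfolding a_def using \<sigma>2 by simp
  have injD: "\<And>j y. inj (blinfun_apply (Dt j y))" unfolding Dt_def using DT_props(4)[OF tor] .
  have cone: "\<And>j y. blinfun_apply (Dt j y) ` Ccu y \<subseteq> Ccu (t j y)"
  proof -
    fix j y
    have "cond_A Ccu Ccs (t j)" using TT[OF tT[of j]] by blast
    then have "frechet_derivative (t j) (at y) ` Ccu y \<subseteq> Ccu (t j y)" unfolding cond_A_def by blast
    then show "blinfun_apply (Dt j y) ` Ccu y \<subseteq> Ccu (t j y)" unfolding Dt_def using DT_props(3)[OF tor] by simp
  qed
  have tpj: "tangent_plane Ccu (x j) (blinfun_apply (dchain Dt t \<phi> D0 j s))" for j
    unfolding x_def by (rule dchain_tangent[of Dt Ccu t \<phi> s D0 j, OF injD cone tp0[OF s]])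
  have tb: "ln (R j) \<le> c - (a + c) * (if x j \<in> BB then 1 else 0)" for j
  proof -
    have Rpos: "R j > 0" unfolding R_def
      by (rule rin_basic(4)) (use injD tpj[of j] in \<open>auto simp: tangent_plane_def\<close>)
    have fdj: "frechet_derivative (t j) (at (x j)) = blinfun_apply (Dt j (x j))"
      unfolding Dt_def using DT_props(3)[OF tor] by simp
    have cb1: "cond_bound uu ss Ccu Ccs V (1 + \<eta>) (t j)" using TT[OF tT[of j]] by blast
    have cb2: "cond_bound uu ss Ccu Ccs (- V) \<sigma>2 (t j)" using TT[OF tT[of j]] by blast
    have cbV: "\<forall>y\<in>V. \<forall>M::real^'u \<Rightarrow> real^'d. tangent_plane Ccu y M \<longrightarrow> restr_inv_norm (frechet_derivative (t j) (at y)) (range M) < 1 + \<eta>"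
      using cb1 unfolding cond_bound_def by blast
    have cbnV: "\<forall>y\<in>- V. \<forall>M::real^'u \<Rightarrow> real^'d. tangent_plane Ccu y M \<longrightarrow> restr_inv_norm (frechet_derivative (t j) (at y)) (range M) < \<sigma>2"
      using cb2 unfolding cond_bound_def by blast
    have bV: "x j \<in> V \<Longrightarrow> R j < 1 + \<eta>"
      using cbV[rule_format, OF _ tpj[of j]] fdj unfolding R_def by simp
    have bnV: "x j \<notin> V \<Longrightarrow> R j < \<sigma>2"
      using cbnV[rule_format, OF _ tpj[of j]] fdj unfolding R_def by simp
    have l1: "ln (R j) \<le> c"
    proof (cases "x j \<in> V")
      case True
      then have "ln (R j) < ln (1 + \<eta>)" using bV Rpos \<eta> by simp
      then show ?thesis using lc by simp
    next
      case False
      then have "R j < 1 + \<eta>" using bnV \<sigma>2 \<eta> by simp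
      then have "ln (R j) < ln (1 + \<eta>)" using Rpos \<eta> by simp
      then show ?thesis using lc by simp
    qed
    show ?thesis
    proof (cases "x j \<in> BB")
      case True
      then have "x j \<notin> V" using BBV by blast
      then have "ln (R j) < ln \<sigma>2" using bnV Rpos \<sigma>2 by simp
      then show ?thesis using True a_def by simp
    next
      case False then show ?thesis using l1 by simp
    qed
  qed
  have "log_sum t \<phi> n s \<le> (\<Sum>j<n. c - (a + c) * (if x j \<in> BB then 1 else 0))"
    unfolding ls by (rule sum_mono) (rule tb)
  also have "\<dots> = c * real n - (a + c) * (\<Sum>j<n. if x j \<in> BB then 1 else 0)"
    by (simp add: sum_subtractf sum_distrib_left[symmetric])
  also have "(\<Sum>j<n. if x j \<in> BB then 1 else 0::real) = real (card {j. j < n \<and> x j \<in> BB})"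
    by (rule sum_if_card)
  also have "c * real n - (a + c) * real (card {j. j < n \<and> x j \<in> BB}) \<le> c * real n - (a + c) * (\<zeta> * real n)"
    using G a c unfolding x_def by (intro diff_left_mono mult_left_mono) auto
  also have "\<dots> = c * real n - (\<zeta> * a) * real n - c * \<zeta> * real n"
    by (simp add: algebra_simps)
  also have "\<dots> = - c * real n - c * \<zeta> * real n"
    using za unfolding a_def by simp
  also have "\<dots> \<le> - c * real n" using c z by simp
  finally show ?thesis .
qed



lemma xj_cont:
  fixes \<phi> :: "real^'k \<Rightarrow> real^'d"
  assumes td: "tangent_disk C \<phi> r" and tor: "\<And>j. torus_C2_diffeo (t j)"
  shows "continuous_on (cball 0 r) (\<lambda>s. rcomp t j (\<phi> s))"
proof -
  obtain U D0 where U: "open U" "cball 0 r \<subseteq> U" and cD0: "continuous_on U D0"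
    and d0: "\<And>s. s \<in> U \<Longrightarrow> (\<phi> has_derivative blinfun_apply (D0 s)) (at s)"
    and tp0: "\<And>s. s \<in> cball 0 r \<Longrightarrow> tangent_plane C (\<phi> s) (blinfun_apply (D0 s))" and "r > 0"
    by (rule td_unpack[OF td], rule that, assumption+)
  have "continuous_on U (\<lambda>s. rcomp t j (\<phi> s))"
    by (rule dchain_cont(1)[of t "\<lambda>j. DT (t j)" U \<phi> D0, OF DT_props(1)[OF tor] DT_props(2)[OF tor] d0 cD0])
  then show ?thesis using U(2) by (rule continuous_on_subset)
qed

lemma dchain_inj:
  assumes "inj (blinfun_apply (D0 s))" and "\<And>j x. inj (blinfun_apply (Dt j x))"
  shows "inj (blinfun_apply (dchain Dt t \<phi> D0 j s))"
proof (induction j)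
  case 0 then show ?case using assms(1) by simp
next
  case (Suc j)
  have "inj (blinfun_apply (Dt j (rcomp t j (\<phi> s))) \<circ> blinfun_apply (dchain Dt t \<phi> D0 j s))"
    using Suc assms(2) by (blast intro: inj_compose)
  then show ?case by (simp add: o_def blinfun_compose.rep_eq)
qed

lemma bad_meas:
  fixes \<phi> :: "real^'k \<Rightarrow> real^'d"
  assumes td: "tangent_disk C \<phi> r" and tor: "\<And>j. torus_C2_diffeo (t j)" and BB: "BB \<in> sets borel"
  shows "{s \<in> cball 0 r. real (card {j. j < n \<and> rcomp t j (\<phi> s) \<in> BB}) < \<zeta> * real n} \<in> sets (disk_measure \<phi> r)"
proof -
  have [measurable]: "(\<lambda>s. rcomp t j (\<phi> s)) \<in> borel_measurable (restrict_space borel (cball 0 r))" for j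
    by (rule borel_measurable_continuous_on_restrict[OF xj_cont[OF td tor]])
  have [measurable]: "BB \<in> sets borel" by (rule BB)
  have "{s \<in> space (restrict_space borel (cball 0 r)). (\<Sum>j<n. indicator BB (rcomp t j (\<phi> s))) < \<zeta> * real n}
     \<in> sets (restrict_space borel (cball (0::real^'k) r))"
    by measurable
  moreover have "(\<Sum>j<n. indicator BB (rcomp t j (\<phi> s))) = real (card {j. j < n \<and> rcomp t j (\<phi> s) \<in> BB})" for s
  proof -
    have "(\<Sum>j<n. indicator BB (rcomp t j (\<phi> s))) = (\<Sum>j<n. if rcomp t j (\<phi> s) \<in> BB then 1 else 0::real)"
      by (rule sum.cong) (auto simp: indicator_def)
    then show ?thesis using sum_if_card[of "\<lambda>j. rcomp t j (\<phi> s) \<in> BB" n] by simp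
  qed
  ultimately show ?thesis using disk_basic(2)[OF td] by (simp add: space_restrict_space)
qed

lemma log_meas:
  fixes \<phi> :: "real^'k \<Rightarrow> real^'d"
  assumes td: "tangent_disk C \<phi> r" and tor: "\<And>j. torus_C2_diffeo (t j)"
  shows "{s \<in> cball 0 r. log_sum t \<phi> n s \<le> y} \<in> sets (disk_measure \<phi> r)"
proof -
  obtain U D0 where U: "open U" "cball 0 r \<subseteq> U" and cD0: "continuous_on U D0"
    and d0: "\<And>s. s \<in> U \<Longrightarrow> (\<phi> has_derivative blinfun_apply (D0 s)) (at s)"
    and tp0: "\<And>s. s \<in> cball 0 r \<Longrightarrow> tangent_plane C (\<phi> s) (blinfun_apply (D0 s))" and "r > 0"
    by (rule td_unpack[OF td], rule that, assumption+)
  define Dt where "Dt = (\<lambda>j. DT (t j))"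
  have dt: "\<And>j x. (t j has_derivative blinfun_apply (Dt j x)) (at x)" unfolding Dt_def using DT_props(1)[OF tor] .
  have cDt: "\<And>j. continuous_on UNIV (Dt j)" unfolding Dt_def using DT_props(2)[OF tor] .
  have injD: "\<And>j y. inj (blinfun_apply (Dt j y))" unfolding Dt_def using DT_props(4)[OF tor] .
  have cF: "continuous_on (cball 0 r) (\<lambda>s. rcomp t j (\<phi> s))" for j
    using dchain_cont(1)[of t Dt U \<phi> D0, OF dt cDt d0 cD0] U(2) by (rule continuous_on_subset)
  have cM: "continuous_on (cball 0 r) (dchain Dt t \<phi> D0 j)" for j
    using dchain_cont(2)[of t Dt U \<phi> D0, OF dt cDt d0 cD0] U(2) by (rule continuous_on_subset)
  have cL: "continuous_on (cball 0 r) (\<lambda>s. Dt j (rcomp t j (\<phi> s)))" for j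
    by (rule continuous_on_compose2[OF cDt[of j] cF]) simp
  have injM: "inj (blinfun_apply (dchain Dt t \<phi> D0 j s))" if "s \<in> cball 0 r" for j s
    using tp0[OF that] injD by (intro dchain_inj) (auto simp: tangent_plane_def)
  have meas: "(\<lambda>s. \<Sum>j<n. ln (restr_inv_norm (blinfun_apply (Dt j (rcomp t j (\<phi> s))))
            (range (blinfun_apply (dchain Dt t \<phi> D0 j s))))) \<in> borel_measurable (restrict_space borel (cball 0 r))"
  proof (intro borel_measurable_sum borel_measurable_ln)
    fix j
    show "(\<lambda>s. restr_inv_norm (blinfun_apply (Dt j (rcomp t j (\<phi> s)))) (range (blinfun_apply (dchain Dt t \<phi> D0 j s))))
       \<in> borel_measurable (restrict_space borel (cball 0 r))"
      by (rule rin_measurable[OF cL cM]) (use injD injM in auto)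
  qed
  have eq: "log_sum t \<phi> n s = (\<Sum>j<n. ln (restr_inv_norm (blinfun_apply (Dt j (rcomp t j (\<phi> s))))
            (range (blinfun_apply (dchain Dt t \<phi> D0 j s)))))" if "s \<in> cball 0 r" for s
    unfolding Dt_def by (rule log_sum_eq[of \<phi> D0 s t n, OF d0 tor]) (use that U in auto)
  have "{s \<in> space (restrict_space borel (cball 0 r)). (\<Sum>j<n. ln (restr_inv_norm (blinfun_apply (Dt j (rcomp t j (\<phi> s))))
            (range (blinfun_apply (dchain Dt t \<phi> D0 j s))))) \<le> y} \<in> sets (restrict_space borel (cball 0 r))"
    using meas by measurable
  moreover have "{s \<in> space (restrict_space borel (cball 0 r)). (\<Sum>j<n. ln (restr_inv_norm (blinfun_apply (Dt j (rcomp t j (\<phi> s))))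
            (range (blinfun_apply (dchain Dt t \<phi> D0 j s))))) \<le> y} = {s \<in> cball 0 r. log_sum t \<phi> n s \<le> y}"
    using eq by (auto simp: space_restrict_space)
  ultimately show ?thesis using disk_basic(2)[OF td] by simp
qed



lemma phi_meas:
  fixes \<phi> :: "real^'k \<Rightarrow> real^'d"
  assumes td: "tangent_disk C \<phi> r"
  shows "\<phi> \<in> borel_measurable (disk_measure \<phi> r)"
proof -
  obtain U D0 where U: "open U" "cball 0 r \<subseteq> U" and cD0: "continuous_on U D0"
    and d0: "\<And>s. s \<in> U \<Longrightarrow> (\<phi> has_derivative blinfun_apply (D0 s)) (at s)"
    and tp0: "\<And>s. s \<in> cball 0 r \<Longrightarrow> tangent_plane C (\<phi> s) (blinfun_apply (D0 s))" and "r > 0"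
    by (rule td_unpack[OF td], rule that, assumption+)
  have "continuous_on U \<phi>"
    by (rule continuous_at_imp_continuous_on) (use d0 has_derivative_continuous in blast)
  then have "continuous_on (cball 0 r) \<phi>" using U(2) by (rule continuous_on_subset)
  then have "\<phi> \<in> borel_measurable (restrict_space borel (cball 0 r))"
    by (rule borel_measurable_continuous_on_restrict)
  then show ?thesis using measurable_cong_sets[OF disk_basic(2)[OF td, symmetric] refl] by blast
qed

lemma joint_meas:
  fixes \<phi> :: "real^'k \<Rightarrow> real^'d" and \<theta> :: "(real^'d \<Rightarrow> real^'d) measure"
  assumes ev: "(\<lambda>(g, x). g x) \<in> borel_measurable (\<theta> \<Otimes>\<^sub>M borel)"
    and td: "tangent_disk C \<phi> r"
  shows "(\<lambda>z. rcomp (fst z) j (\<phi> (snd z))) \<in> borel_measurable (PiM UNIV (\<lambda>_. \<theta>) \<Otimes>\<^sub>M disk_measure \<phi> r)"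
proof (induction j)
  case 0
  show ?case using measurable_compose[OF measurable_snd phi_meas[OF td]] by (simp add: o_def)
next
  case (Suc j)
  have p: "(\<lambda>z. (fst z j, rcomp (fst z) j (\<phi> (snd z)))) \<in> measurable (PiM UNIV (\<lambda>_. \<theta>) \<Otimes>\<^sub>M disk_measure \<phi> r) (\<theta> \<Otimes>\<^sub>M borel)"
  proof (rule measurable_Pair)
    show "(\<lambda>z. fst z j) \<in> measurable (PiM UNIV (\<lambda>_. \<theta>) \<Otimes>\<^sub>M disk_measure \<phi> r) \<theta>"
      using measurable_compose[OF measurable_fst measurable_component_singleton[of j UNIV "\<lambda>_. \<theta>"]] by simp
    show "(\<lambda>z. rcomp (fst z) j (\<phi> (snd z))) \<in> borel_measurable (PiM UNIV (\<lambda>_. \<theta>) \<Otimes>\<^sub>M disk_measure \<phi> r)"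
      by (rule Suc)
  qed
  show ?case using measurable_compose[OF p ev] by simp
qed

lemma good_set_meas:
  fixes \<phi> :: "real^'k \<Rightarrow> real^'d" and \<theta> :: "(real^'d \<Rightarrow> real^'d) measure"
  assumes ev: "(\<lambda>(g, x). g x) \<in> borel_measurable (\<theta> \<Otimes>\<^sub>M borel)"
    and td: "tangent_disk C \<phi> r" and BB: "BB \<in> sets borel"
  shows "{z \<in> space (PiM UNIV (\<lambda>_. \<theta>) \<Otimes>\<^sub>M disk_measure \<phi> r). \<exists>N::nat. \<forall>n\<ge>N.
            \<not> real (card {j. j < n \<and> rcomp (fst z) j (\<phi> (snd z)) \<in> BB}) < \<zeta> * real n}
         \<in> sets (PiM UNIV (\<lambda>_. \<theta>) \<Otimes>\<^sub>M disk_measure \<phi> r)"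
proof -
  have [measurable]: "(\<lambda>z. rcomp (fst z) j (\<phi> (snd z))) \<in> borel_measurable (PiM UNIV (\<lambda>_. \<theta>) \<Otimes>\<^sub>M disk_measure \<phi> r)" for j
    by (rule joint_meas[OF ev td])
  have [measurable]: "BB \<in> sets borel" by (rule BB)
  have eq: "real (card {j. j < n \<and> rcomp (fst z) j (\<phi> (snd z)) \<in> BB}) = (\<Sum>j<n. indicator BB (rcomp (fst z) j (\<phi> (snd z))))" for z n
  proof -
    have "(\<Sum>j<n. indicator BB (rcomp (fst z) j (\<phi> (snd z)))) = (\<Sum>j<n. if rcomp (fst z) j (\<phi> (snd z)) \<in> BB then 1 else 0::real)"
      by (rule sum.cong) (auto simp: indicator_def)
    then show ?thesis using sum_if_card[of "\<lambda>j. rcomp (fst z) j (\<phi> (snd z)) \<in> BB" n] by simp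
  qed
  show ?thesis unfolding eq by measurable
qed



lemma pointwise_limsup:
  fixes \<phi> :: "real^'u \<Rightarrow> real^'d" and uu :: "'u itself" and ss :: "'s::finite itself"
  assumes TT: "\<And>g. g \<in> T \<Longrightarrow> torus_C2_diffeo g \<and> cond_A Ccu Ccs g \<and> cond_bound uu ss Ccu Ccs (- V) \<sigma>2 g
        \<and> cond_bound uu ss Ccu Ccs V (1 + \<eta>) g"
    and td: "tangent_disk Ccu \<phi> r" and tT: "\<And>j. t j \<in> T" and s: "s \<in> cball 0 r"
    and \<sigma>2: "0 < \<sigma>2" "\<sigma>2 < 1" and \<eta>: "\<eta> > 0" and BBV: "BB \<inter> V = {}"
    and lc: "ln (1 + \<eta>) = c" and za: "\<zeta> * (- ln \<sigma>2) = 2 * c" and z: "\<zeta> > 0" and c: "c > 0"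
    and evg: "\<exists>N::nat. \<forall>n\<ge>N. \<not> real (card {j. j < n \<and> rcomp t j (\<phi> s) \<in> BB}) < \<zeta> * real n"
  shows "limsup (\<lambda>n. ereal (log_sum t \<phi> n s / real n)) \<le> ereal (- c)"
proof -
  obtain N where N: "\<And>n. n \<ge> N \<Longrightarrow> \<not> real (card {j. j < n \<and> rcomp t j (\<phi> s) \<in> BB}) < \<zeta> * real n"
    using evg by blast
  have "eventually (\<lambda>n. ereal (log_sum t \<phi> n s / real n) \<le> ereal (- c)) sequentially"
    unfolding eventually_sequentially
  proof (intro exI[of _ "max N 1"] allI impI)
    fix n assume n: "max N 1 \<le> n"
    have "log_sum t \<phi> n s \<le> - c * real n"
      by (rule key_bound[OF TT td tT s \<sigma>2 \<eta> BBV lc za z c]) (use N[of n] n in auto)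
    moreover have "real n > 0" using n by simp
    ultimately have "log_sum t \<phi> n s / real n \<le> - c" by (simp add: divide_simps)
    then show "ereal (log_sum t \<phi> n s / real n) \<le> ereal (- c)" by simp
  qed
  then show ?thesis by (rule Limsup_bounded)
qed

lemma per_t_AE:
  fixes \<phi> :: "real^'k \<Rightarrow> real^'d"
  assumes td: "tangent_disk C \<phi> r" and tor: "\<And>j. torus_C2_diffeo (t j)" and BB: "BB \<in> sets borel"
    and hyp: "\<exists>N. \<forall>n\<ge>N. measure (disk_measure \<phi> r) {s \<in> cball 0 r. real (card {j. j < n \<and> rcomp t j (\<phi> s) \<in> BB}) < \<zeta> * real n} \<le> \<tau> ^ n"
    and \<tau>: "0 < \<tau>" "\<tau> < 1"
  shows "AE s in disk_measure \<phi> r. \<exists>N::nat. \<forall>n\<ge>N. \<not> real (card {j. j < n \<and> rcomp t j (\<phi> s) \<in> BB}) < \<zeta> * real n"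
proof -
  let ?M = "disk_measure \<phi> r"
  define A where "A = (\<lambda>n. {s \<in> cball 0 r. real (card {j. j < n \<and> rcomp t j (\<phi> s) \<in> BB}) < \<zeta> * real n})"
  interpret P: prob_space ?M by (rule disk_basic(3)[OF td])
  have As: "\<And>n. A n \<in> sets ?M" unfolding A_def by (rule bad_meas[OF td tor BB])
  have Af: "\<And>n. emeasure ?M (A n) < \<infinity>" by (simp add: less_top[symmetric])
  obtain N where N: "\<And>n. n \<ge> N \<Longrightarrow> measure ?M (A n) \<le> \<tau> ^ n" using hyp unfolding A_def by blast
  have sm: "summable (\<lambda>n. measure ?M (A n))"
    by (rule summable_comparison_test'[of "\<lambda>n. \<tau> ^ n" N]) (use \<tau> N in \<open>auto intro: summable_geometric\<close>)
  have BC: "AE x in ?M. eventually (\<lambda>n. x \<in> space ?M - A n) sequentially"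
    by (rule borel_cantelli_AE1[OF As Af sm])
  show ?thesis
  proof (rule AE_mp[OF BC AE_I2], rule impI)
    fix x assume x: "x \<in> space ?M" and ev: "eventually (\<lambda>n. x \<in> space ?M - A n) sequentially"
    then obtain N' where "\<And>n. n \<ge> N' \<Longrightarrow> x \<in> space ?M - A n" unfolding eventually_sequentially by blast
    then show "\<exists>N::nat. \<forall>n\<ge>N. \<not> real (card {j. j < n \<and> rcomp t j (\<phi> x) \<in> BB}) < \<zeta> * real n"
      using x disk_basic(1)[OF td] unfolding A_def by blast
  qed
qed



lemma disk_conclusion:
  fixes \<phi> :: "real^'u \<Rightarrow> real^'d" and uu :: "'u itself" and ss :: "'s::finite itself"
    and \<theta> :: "(real^'d \<Rightarrow> real^'d) measure"
  assumes TT: "\<And>g. g \<in> T \<Longrightarrow> torus_C2_diffeo g \<and> cond_A Ccu Ccs g \<and> cond_bound uu ss Ccu Ccs (- V) \<sigma>2 g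
        \<and> cond_bound uu ss Ccu Ccs V (1 + \<eta>) g"
    and fT: "f \<in> T" and ps: "prob_space \<theta>" and sp\<theta>: "space \<theta> = T"
    and ev: "(\<lambda>(g, x). g x) \<in> borel_measurable (\<theta> \<Otimes>\<^sub>M borel)"
    and td: "tangent_disk Ccu \<phi> r"
    and hyp: "\<And>t. (\<forall>j. t j \<in> T) \<Longrightarrow> \<exists>N. \<forall>n\<ge>N. measure (disk_measure \<phi> r)
             {s \<in> cball 0 r. real (card {j. j < n \<and> rcomp t j (\<phi> s) \<in> BB}) < \<zeta> * real n} \<le> \<tau> ^ n"
    and \<sigma>2: "0 < \<sigma>2" "\<sigma>2 < 1" and \<eta>: "\<eta> > 0" and BBV: "BB \<inter> V = {}" and BB: "BB \<in> sets borel"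
    and lc: "ln (1 + \<eta>) = c" and za: "\<zeta> * (- ln \<sigma>2) = 2 * c" and zpos: "\<zeta> > 0" and c: "c > 0"
    and \<tau>: "0 < \<tau>" "\<tau> < 1"
  shows "(\<forall>t. (\<forall>j. t j \<in> T) \<longrightarrow> (\<exists>N. \<forall>n\<ge>N.
           measure (disk_measure \<phi> r) {s \<in> cball 0 r. log_sum t \<phi> n s \<le> - c * real n}
           \<ge> 1 - \<tau> ^ n)) \<and>
        (AE (t, s) in (PiM UNIV (\<lambda>_. \<theta>)) \<Otimes>\<^sub>M disk_measure \<phi> r.
           limsup (\<lambda>n. ereal (log_sum t \<phi> n s / real n)) \<le> ereal (- c)) \<and>
        (AE s in disk_measure \<phi> r.
           limsup (\<lambda>n. ereal (log_sum (\<lambda>_. f) \<phi> n s / real n)) \<le> ereal (- c))"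
proof (intro conjI allI impI)
  let ?M2 = "disk_measure \<phi> r"
  let ?M1 = "PiM UNIV (\<lambda>_::nat. \<theta>)"
  interpret M2: prob_space ?M2 by (rule disk_basic(3)[OF td])
  have sp2: "space ?M2 = cball 0 r" by (rule disk_basic(1)[OF td])
  fix t :: "nat \<Rightarrow> real^'d \<Rightarrow> real^'d" assume tT: "\<forall>j. t j \<in> T"
  have tor: "\<And>j. torus_C2_diffeo (t j)" using TT tT by blast
  obtain N where N: "\<And>n. n \<ge> N \<Longrightarrow> measure ?M2 {s \<in> cball 0 r. real (card {j. j < n \<and> rcomp t j (\<phi> s) \<in> BB}) < \<zeta> * real n} \<le> \<tau> ^ n"
    using hyp[OF tT] by blast
  show "\<exists>N. \<forall>n\<ge>N. measure ?M2 {s \<in> cball 0 r. log_sum t \<phi> n s \<le> - c * real n} \<ge> 1 - \<tau> ^ n"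
  proof (intro exI[of _ N] allI impI)
    fix n assume n: "N \<le> n"
    define Bad where "Bad = {s \<in> cball 0 r. real (card {j. j < n \<and> rcomp t j (\<phi> s) \<in> BB}) < \<zeta> * real n}"
    have Bs: "Bad \<in> sets ?M2" unfolding Bad_def by (rule bad_meas[OF td tor BB])
    have Ls: "{s \<in> cball 0 r. log_sum t \<phi> n s \<le> - c * real n} \<in> sets ?M2" by (rule log_meas[OF td tor])
    have sub: "space ?M2 - Bad \<subseteq> {s \<in> cball 0 r. log_sum t \<phi> n s \<le> - c * real n}"
    proof
      fix s assume s: "s \<in> space ?M2 - Bad"
      then have sc: "s \<in> cball 0 r" using sp2 by blast
      have "log_sum t \<phi> n s \<le> - c * real n"
        by (rule key_bound[OF TT td _ sc \<sigma>2 \<eta> BBV lc za zpos c]) (use tT s sc in \<open>auto simp: Bad_def\<close>)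
      then show "s \<in> {s \<in> cball 0 r. log_sum t \<phi> n s \<le> - c * real n}" using sc by blast
    qed
    have "1 - \<tau> ^ n \<le> 1 - measure ?M2 Bad" using N[OF n] unfolding Bad_def by simp
    also have "\<dots> = measure ?M2 (space ?M2 - Bad)" using M2.prob_compl[OF Bs] by simp
    also have "\<dots> \<le> measure ?M2 {s \<in> cball 0 r. log_sum t \<phi> n s \<le> - c * real n}"
      by (rule M2.finite_measure_mono[OF sub Ls])
    finally show "measure ?M2 {s \<in> cball 0 r. log_sum t \<phi> n s \<le> - c * real n} \<ge> 1 - \<tau> ^ n" .
  qed
next
  let ?M2 = "disk_measure \<phi> r"
  let ?M1 = "PiM UNIV (\<lambda>_::nat. \<theta>)"
  interpret M2: prob_space ?M2 by (rule disk_basic(3)[OF td])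
  have sp2: "space ?M2 = cball 0 r" by (rule disk_basic(1)[OF td])
  have fall: "\<forall>j. (\<lambda>_::nat. f) j \<in> T" using fT by simp
  have ftor: "\<And>j. torus_C2_diffeo ((\<lambda>_::nat. f) j)" using TT fT by blast
  have "AE s in ?M2. \<exists>N::nat. \<forall>n\<ge>N. \<not> real (card {j. j < n \<and> rcomp (\<lambda>_. f) j (\<phi> s) \<in> BB}) < \<zeta> * real n"
    by (rule per_t_AE[OF td ftor BB hyp[OF fall] \<tau>])
  then show "AE s in ?M2. limsup (\<lambda>n. ereal (log_sum (\<lambda>_. f) \<phi> n s / real n)) \<le> ereal (- c)"
  proof (rule AE_mp[OF _ AE_I2], intro impI)
    fix s assume s: "s \<in> space ?M2"
      and e: "\<exists>N::nat. \<forall>n\<ge>N. \<not> real (card {j. j < n \<and> rcomp (\<lambda>_. f) j (\<phi> s) \<in> BB}) < \<zeta> * real n"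
    show "limsup (\<lambda>n. ereal (log_sum (\<lambda>_. f) \<phi> n s / real n)) \<le> ereal (- c)"
      by (rule pointwise_limsup[OF TT td _ _ \<sigma>2 \<eta> BBV lc za zpos c e]) (use fT s sp2 in auto)
  qed
next
  let ?M2 = "disk_measure \<phi> r"
  let ?M1 = "PiM UNIV (\<lambda>_::nat. \<theta>)"
  have p2: "prob_space ?M2" by (rule disk_basic(3)[OF td])
  have p1: "prob_space ?M1" by (rule prob_space_PiM) (use ps in simp)
  interpret P: pair_sigma_finite ?M1 ?M2
    unfolding pair_sigma_finite_def using p1 p2 by (simp add: prob_space_imp_sigma_finite)
  interpret M2: prob_space ?M2 by (rule p2)
  have sp2: "space ?M2 = cball 0 r" by (rule disk_basic(1)[OF td])
  have sp1: "t \<in> space ?M1 \<Longrightarrow> t j \<in> T" for t j using sp\<theta> by (auto simp: space_PiM PiE_iff)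
  let ?P = "\<lambda>z. \<exists>N::nat. \<forall>n\<ge>N. \<not> real (card {j. j < n \<and> rcomp (fst z) j (\<phi> (snd z)) \<in> BB}) < \<zeta> * real n"
  have Pm: "{z \<in> space (?M1 \<Otimes>\<^sub>M ?M2). ?P z} \<in> sets (?M1 \<Otimes>\<^sub>M ?M2)"
    by (rule good_set_meas[OF ev td BB])
  have "AE t in ?M1. AE s in ?M2. ?P (t, s)"
  proof (rule AE_I2)
    fix t assume t: "t \<in> space ?M1"
    have tT: "\<forall>j. t j \<in> T" using sp1[OF t] by blast
    have tor: "\<And>j. torus_C2_diffeo (t j)" using TT tT by blast
    show "AE s in ?M2. ?P (t, s)"
      using per_t_AE[OF td tor BB hyp[OF tT] \<tau>] by simp
  qed
  then have AP: "AE z in ?M1 \<Otimes>\<^sub>M ?M2. ?P z" by (rule P.AE_pair_measure[OF Pm])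
  show "AE (t, s) in ?M1 \<Otimes>\<^sub>M ?M2. limsup (\<lambda>n. ereal (log_sum t \<phi> n s / real n)) \<le> ereal (- c)"
  proof (rule AE_mp[OF AP AE_I2], intro impI)
    fix z assume z: "z \<in> space (?M1 \<Otimes>\<^sub>M ?M2)" and e: "?P z"
    obtain t s where zts: "z = (t, s)" by (cases z)
    have t: "t \<in> space ?M1" and s: "s \<in> space ?M2" using z zts by (auto simp: space_pair_measure)
    have "limsup (\<lambda>n. ereal (log_sum t \<phi> n s / real n)) \<le> ereal (- c)"
      by (rule pointwise_limsup[OF TT td _ _ \<sigma>2 \<eta> BBV lc za zpos c]) (use sp1[OF t] s sp2 e zts in auto)
    then show "case z of (t, s) \<Rightarrow> limsup (\<lambda>n. ereal (log_sum t \<phi> n s / real n)) \<le> ereal (- c)"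
      using zts by simp
  qed
qed


theorem lemma7p4:
  fixes Ahat :: "real^'d^'d"
    and V :: "(real^'d) set" and c0 c1 :: "real^'d"
    and Ccu Ccs :: "real^'d \<Rightarrow> (real^'d) set" and w :: real
    and \<sigma>1 \<sigma>2 \<zeta> \<tau> :: real
    and p :: nat and B :: "nat \<Rightarrow> (real^'d) set" and k0 k1 :: "nat \<Rightarrow> real^'d"
    and uu :: "'u::finite itself" and ss :: "'s::finite itself"
  assumes d2: "CARD('d) \<ge> 2"
    and anosov: "linear_anosov Ahat"
    and dim_u: "CARD('u) = dim (unstable_sp Ahat)"
    and dim_s: "CARD('s) = dim (stable_sp Ahat)"
    and V_closed: "closed V" and V_domain: "V = closure (interior V)" and V_per: "zperiodic V"
    and V_K0: "V \<subseteq> proj_pre (unit_cube c0)"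
    and V_K1: "\<forall>x\<in>V. Ahat *v x \<in> proj_pre (unit_cube c1)"
    and w_pos: "w > 0"
    and Ccu_per: "\<forall>x k. k \<in> Zd \<longrightarrow> Ccu (x + k) = Ccu x"
    and Ccs_per: "\<forall>x k. k \<in> Zd \<longrightarrow> Ccs (x + k) = Ccs x"
    and Ccu_cone: "\<forall>x. unstable_sp Ahat \<subseteq> Ccu x \<and> Ccu x \<subseteq> cone_around w (unstable_sp Ahat) (stable_sp Ahat)"
    and Ccs_cone: "\<forall>x. stable_sp Ahat \<subseteq> Ccs x \<and> Ccs x \<subseteq> cone_around w (stable_sp Ahat) (unstable_sp Ahat)"
    and \<sigma>1_gt: "\<sigma>1 > 1"
    and B_borel: "\<forall>i\<in>{1..p+1}. B i \<in> sets borel"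
    and B_per: "\<forall>i\<in>{1..p+1}. zperiodic (B i)"
    and B_disj: "\<forall>i\<in>{1..p+1}. \<forall>j\<in>{1..p+1}. i \<noteq> j \<longrightarrow> B i \<inter> B j = {}"
    and B_cover: "(\<Union>i\<in>{1..p+1}. B i) = UNIV"
    and B_V: "B (p+1) = V"
    and \<zeta>_pos: "\<zeta> > 0"
    and \<tau>_bounds: "0 < \<tau> \<and> \<tau> < 1"
    and \<sigma>2_bounds: "0 < \<sigma>2 \<and> \<sigma>2 < 1"
  shows "\<exists>\<eta>>0. \<exists>c>0. \<forall>(f::real^'d \<Rightarrow> real^'d) T (\<theta>::(real^'d \<Rightarrow> real^'d) measure).
     torus_C2_diffeo f \<and> C2_nbhd T f \<and>
     (\<forall>g\<in>T. cond_A Ccu Ccs g \<and> cond_B uu ss Ccu Ccs \<sigma>1 g \<and>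
             cond_bound uu ss Ccu Ccs (- V) \<sigma>2 g \<and> cond_bound uu ss Ccu Ccs V (1 + \<eta>) g) \<and>
     prob_space \<theta> \<and> space \<theta> = T \<and>
     (\<lambda>(g, x). g x) \<in> borel_measurable (\<theta> \<Otimes>\<^sub>M borel) \<and>
     (\<forall>i\<in>{1..p}. B i \<subseteq> proj_pre (unit_cube (k0 i)) \<and>
                  (\<forall>x\<in>B i. f x \<in> proj_pre (unit_cube (k1 i)))) \<and>
     (\<forall>(\<phi>::real^'u \<Rightarrow> real^'d) r. tangent_disk Ccu \<phi> r \<longrightarrow>
        (\<forall>t. (\<forall>j. t j \<in> T) \<longrightarrow> (\<exists>N. \<forall>n\<ge>N.
           measure (disk_measure \<phi> r)
             {s \<in> cball 0 r. real (card {j. j < n \<and> rcomp t j (\<phi> s) \<in> (\<Union>i\<in>{1..p}. B i)}) < \<zeta> * real n}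
           \<le> \<tau> ^ n)))
     \<longrightarrow>
     (\<forall>(\<phi>::real^'u \<Rightarrow> real^'d) r. tangent_disk Ccu \<phi> r \<longrightarrow>
        (\<forall>t. (\<forall>j. t j \<in> T) \<longrightarrow> (\<exists>N. \<forall>n\<ge>N.
           measure (disk_measure \<phi> r) {s \<in> cball 0 r. log_sum t \<phi> n s \<le> - c * real n}
           \<ge> 1 - \<tau> ^ n)) \<and>
        (AE (t, s) in (PiM UNIV (\<lambda>_. \<theta>)) \<Otimes>\<^sub>M disk_measure \<phi> r.
           limsup (\<lambda>n. ereal (log_sum t \<phi> n s / real n)) \<le> ereal (- c)) \<and>
        (AE s in disk_measure \<phi> r.
           limsup (\<lambda>n. ereal (log_sum (\<lambda>_. f) \<phi> n s / real n)) \<le> ereal (- c)))"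
  proof -
  have ln\<sigma>: "ln \<sigma>2 < 0" using \<sigma>2_bounds by simp
  define c where "c = \<zeta> * (- ln \<sigma>2) / 2"
  define \<eta> where "\<eta> = exp c - 1"
  have cpos: "c > 0" unfolding c_def using ln\<sigma> \<zeta>_pos by (simp add: mult_pos_neg)
  have \<eta>pos: "\<eta> > 0" unfolding \<eta>_def using cpos by simp
  have lc: "ln (1 + \<eta>) = c" unfolding \<eta>_def by simp
  have za: "\<zeta> * (- ln \<sigma>2) = 2 * c" unfolding c_def by simp
  have BBV: "(\<Union>i\<in>{1..p}. B i) \<inter> V = {}"
  proof -
    have "B i \<inter> B (p+1) = {}" if "i \<in> {1..p}" for i
      using B_disj that by auto
    then show ?thesis using B_V by blast
  qed
  have BBs: "(\<Union>i\<in>{1..p}. B i) \<in> sets borel"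
    using B_borel by (intro sets.finite_UN) auto
  show ?thesis
    apply (rule exI[of _ \<eta>], rule conjI[OF \<eta>pos], rule exI[of _ c], rule conjI[OF cpos])
    apply (intro allI impI)
    subgoal premises prems for f T \<theta> \<phi> r
    proof -
      note H = prems(1)
      note td = prems(2)
      note nb = conjunct1[OF conjunct2[OF H]]
      note TTc = conjunct1[OF conjunct2[OF conjunct2[OF H]]]
      note ps = conjunct1[OF conjunct2[OF conjunct2[OF conjunct2[OF H]]]]
      note sp\<theta> = conjunct1[OF conjunct2[OF conjunct2[OF conjunct2[OF conjunct2[OF H]]]]]
      note ev = conjunct1[OF conjunct2[OF conjunct2[OF conjunct2[OF conjunct2[OF conjunct2[OF H]]]]]]
      note hypB = conjunct2[OF conjunct2[OF conjunct2[OF conjunct2[OF conjunct2[OF conjunct2[OF conjunct2[OF H]]]]]]]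
      have fT: "f \<in> T" using nb unfolding C2_nbhd_def by blast
      have Ttor: "\<And>g. g \<in> T \<Longrightarrow> torus_C2_diffeo g" using nb unfolding C2_nbhd_def by blast
      have TT: "\<And>g. g \<in> T \<Longrightarrow> torus_C2_diffeo g \<and> cond_A Ccu Ccs g \<and> cond_bound uu ss Ccu Ccs (- V) \<sigma>2 g
        \<and> cond_bound uu ss Ccu Ccs V (1 + \<eta>) g"
        using Ttor TTc by blast
      show ?thesis
        by (rule disk_conclusion[OF TT fT ps sp\<theta> ev td hypB[THEN spec, THEN spec, THEN mp, OF td, THEN spec, THEN mp]
              \<sigma>2_bounds[THEN conjunct1] \<sigma>2_bounds[THEN conjunct2] \<eta>pos BBV BBs lc za \<zeta>_pos cpos
              \<tau>_bounds[THEN conjunct1] \<tau>_bounds[THEN conjunct2]])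
    qed
    done
qed

end
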